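(* Under the standing setup with $\gamma>0$ and $s_1=\dots=s_n=1$ (so Hank's strategy set is $\{1\}$ and Georgia's is $[0,1]$), define $\hat m(1,1)=\chi\gamma+\beta-\beta\lambda-\lambda\gamma$, $\hat m(0,1)=\beta-\lambda\beta+(\lambda+\gamma+\chi-2)\gamma$ and $\hat w(1)=\frac{\lambda+\gamma-1+\sqrt{1-\beta+(\lambda+\gamma+\beta-2)\lambda-\chi\gamma}}{\gamma}$. Then the Nash equilibrium of the zero-sum game (Georgia minimizing $f$, Hank maximizing $f$) is $(0,1)$ if $\hat m(0,1)\ge0$; $(1,1)$ if $\hat m(1,1)\le0$; and $(\hat w(1),1)$ otherwise.
   Context: Standing setup. Fix $n\in\mathbb N$ and $W=[w_{ij}]\in\mathbb R^{n\times n}$ with $w_{ij}\ge0$, $w_{ii}=0$. Let $\|W\|_\infty=\max_i\sum_j|w_{ij}|$, $\|W\|_1=\max_j\sum_i|w_{ij}|$, let $\lambda$ be the spectral radius of $W$, and assume there is $c\in\mathbb R^n$ with all entries positive and $W^\top c=\lambda c$. Fix $\beta\ge\gamma\ge0$ with $1-\max\{\|W\|_\infty,\|W\|_1\}>\max\{2\beta,4\gamma\}$. Fix innate opinions $s\in[0,1]^n$, $\overline s=\max_is_i$, $\underline s=\min_is_i$; Georgia chooses $g\in[0,\underline s]$, Hank chooses $h\in[\overline s,1]$. Set $\widehat c_i=c_i/\sum_jc_j$, $\widehat s=\sum_i\widehat c_is_i$, $\chi=\sum_i\widehat c_is_i\sum_jw_{ij}$. Define $$f(g,h)=\frac{(1-2\beta+(h-g)\gamma)\widehat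 s-\chi+(h+g)\beta+(g^2-h^2)\gamma}{1-\lambda+(g-h)\gamma}\,c^\top\mathbf 1$$ (the centrality-weighted steady state of the opinion dynamics with source opinions $g,h$). *)

theory Defs
  imports "Jordan_Normal_Form.Spectral_Radius"
begin

definition norm_inf_mat :: "nat \<Rightarrow> real mat \<Rightarrow> real" where
  "norm_inf_mat n W = Max ((\<lambda>i. \<Sum>j<n. \<bar>W $$ (i,j)\<bar>) ` {..<n})"

definition norm_one_mat :: "nat \<Rightarrow> real mat \<Rightarrow> real" where
  "norm_one_mat n W = Max ((\<lambda>j. \<Sum>i<n. \<bar>W $$ (i,j)\<bar>) ` {..<n})"

definition steady_f :: "nat \<Rightarrow> real mat \<Rightarrow> real vec \<Rightarrow> real \<Rightarrow> real \<Rightarrow> real \<Rightarrow> real vec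
    \<Rightarrow> real \<Rightarrow> real \<Rightarrow> real" where
  "steady_f n W c lam \<beta> \<gamma> s g h =
    (let C = (\<Sum>j<n. c $ j);
         chat = (\<lambda>i. c $ i / C);
         shat = (\<Sum>i<n. chat i * s $ i);
         chi = (\<Sum>i<n. chat i * s $ i * (\<Sum>j<n. W $$ (i,j)))
     in ((1 - 2*\<beta> + (h - g)*\<gamma>) * shat - chi + (h + g)*\<beta> + (g^2 - h^2)*\<gamma>)
        / (1 - lam + (g - h)*\<gamma>) * C)"

definition chi_val :: "nat \<Rightarrow> real mat \<Rightarrow> real vec \<Rightarrow> real vec \<Rightarrow> real" where
  "chi_val n W c s = (\<Sum>i<n. (c $ i / (\<Sum>j<n. c $ j)) * s $ i * (\<Sum>j<n. W $$ (i,j)))"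

definition nash_eq :: "(real \<Rightarrow> real \<Rightarrow> real) \<Rightarrow> real set \<Rightarrow> real set \<Rightarrow> real \<times> real \<Rightarrow> bool" where
  "nash_eq f G H p \<longleftrightarrow> fst p \<in> G \<and> snd p \<in> H \<and>
     (\<forall>g\<in>G. f (fst p) (snd p) \<le> f g (snd p)) \<and>
     (\<forall>h\<in>H. f (fst p) h \<le> f (fst p) (snd p))"

end

theory Submission
  imports Defs
begin

lemma eig_sum:
  fixes W :: "real mat" and c :: "real vec"
  assumes W_carrier: "W \<in> carrier_mat n n" and c_dim: "dim_vec c = n"
    and c_eig: "transpose_mat W *\<^sub>v c = lam \<cdot>\<^sub>v c"
  shows "(\<Sum>i<n. c $ i * (\<Sum>j<n. W $$ (i,j))) = lam * (\<Sum>j<n. c $ j)"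
proof -
  have col: "(\<Sum>i<n. W $$ (i,j) * c $ i) = lam * c $ j" if j: "j < n" for j
  proof -
    have "(transpose_mat W *\<^sub>v c) $ j = lam * c $ j"
      using c_eig j c_dim by (metis index_smult_vec(1))
    moreover have "(transpose_mat W *\<^sub>v c) $ j = (\<Sum>i<n. W $$ (i,j) * c $ i)"
      using W_carrier j c_dim
      by (simp add: scalar_prod_def lessThan_atLeast0)
    ultimately show ?thesis by simp
  qed
  have "(\<Sum>i<n. c $ i * (\<Sum>j<n. W $$ (i,j))) = (\<Sum>i<n. \<Sum>j<n. W $$ (i,j) * c $ i)"
    by (simp add: sum_distrib_left mult.commute)
  also have "\<dots> = (\<Sum>j<n. \<Sum>i<n. W $$ (i,j) * c $ i)" by (rule sum.swap)
  also have "\<dots> = (\<Sum>j<n. lam * c $ j)" using col by simp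
  finally show ?thesis by (simp add: sum_distrib_left)
qed

lemma phi_diff:
  fixes t u M :: real
  assumes "t > 0" "u > 0"
  shows "(t + M/t) - (u + M/u) = (t - u) * (t*u - M) / (t*u)"
  using assms by (simp add: field_simps)

lemma ratio_form:
  fixes a \<beta> \<gamma> g :: real
  assumes "\<gamma> > 0" "a - \<gamma> + g*\<gamma> > 0"
  shows "((1 - 2*\<beta> + (1 - g)*\<gamma>) - (1 - a) + (1 + g)*\<beta> + (g^2 - 1^2)*\<gamma>) / (a + (g - 1)*\<gamma>)
     = ((a - \<gamma> + g*\<gamma>) + a*(a-\<beta>)/(a - \<gamma> + g*\<gamma>))/\<gamma> + (\<beta> - \<gamma> - 2*(a-\<gamma>))/\<gamma>"
proof -
  define t where "t = a - \<gamma> + g*\<gamma>"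
  have t0: "t \<noteq> 0" using assms t_def by simp
  have den: "a + (g - 1)*\<gamma> = t" by (simp add: t_def algebra_simps)
  have num: "((1 - 2*\<beta> + (1 - g)*\<gamma>) - (1 - a) + (1 + g)*\<beta> + (g^2 - 1^2)*\<gamma>) * \<gamma>
     = t*t + (\<beta> - \<gamma> - 2*(a-\<gamma>))*t + a*(a-\<beta>)"
    by (simp add: t_def algebra_simps power2_eq_square)
  have "((1 - 2*\<beta> + (1 - g)*\<gamma>) - (1 - a) + (1 + g)*\<beta> + (g^2 - 1^2)*\<gamma>)
     = (t*t + (\<beta> - \<gamma> - 2*(a-\<gamma>))*t + a*(a-\<beta>)) / \<gamma>"
    using num assms by (simp add: eq_divide_eq)
  moreover have "(t*t + (\<beta> - \<gamma> - 2*(a-\<gamma>))*t + a*(a-\<beta>)) / \<gamma> / t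
     = (t + a*(a-\<beta>)/t)/\<gamma> + (\<beta> - \<gamma> - 2*(a-\<gamma>))/\<gamma>"
    using t0 assms by (simp add: field_simps)
  ultimately show ?thesis unfolding den by (simp add: t_def)
qed
theorem corollary5:
  fixes n :: nat and W :: "real mat" and c :: "real vec" and s :: "real vec"
    and lam \<beta> \<gamma> :: real
  assumes n_pos: "n > 0"
    and W_carrier: "W \<in> carrier_mat n n"
    and W_nonneg: "\<forall>i<n. \<forall>j<n. W $$ (i,j) \<ge> 0"
    and W_diag: "\<forall>i<n. W $$ (i,i) = 0"
    and lam_def: "lam = spectral_radius (map_mat complex_of_real W)"
    and c_dim: "dim_vec c = n"
    and c_pos: "\<forall>i<n. c $ i > 0"
    and c_eig: "transpose_mat W *\<^sub>v c = lam \<cdot>\<^sub>v c"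
    and beta_gamma: "\<beta> \<ge> \<gamma>" and gamma_pos: "\<gamma> > 0"
    and norm_cond: "1 - max (norm_inf_mat n W) (norm_one_mat n W) > max (2*\<beta>) (4*\<gamma>)"
    and s_dim: "dim_vec s = n"
    and s_one: "\<forall>i<n. s $ i = 1"
  defines "f \<equiv> steady_f n W c lam \<beta> \<gamma> s"
    and "G \<equiv> {0 .. Min ((\<lambda>i. s $ i) ` {..<n})}"
    and "H \<equiv> {Max ((\<lambda>i. s $ i) ` {..<n}) .. 1}"
    and "m11 \<equiv> (chi_val n W c s)*\<gamma> + \<beta> - \<beta>*lam - lam*\<gamma>"
    and "m01 \<equiv> \<beta> - lam*\<beta> + (lam + \<gamma> + chi_val n W c s - 2)*\<gamma>"
    and "w1 \<equiv> (lam + \<gamma> - 1 + sqrt (1 - \<beta> + (lam + \<gamma> + \<beta> - 2)*lam - (chi_val n W c s)*\<gamma>)) / \<gamma>"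
  shows "{p. nash_eq f G H p} =
           (if m01 \<ge> 0 then {(0, 1)} else if m11 \<le> 0 then {(1, 1)} else {(w1, 1)})"
proof -
  define C where "C = (\<Sum>j<n. c $ j)"
  define r where "r = (\<lambda>i. \<Sum>j<n. W $$ (i,j))"
  have Cpos: "C > 0" unfolding C_def using c_pos n_pos
    by (intro sum_pos) auto
  have rnn: "r i \<ge> 0" if "i < n" for i using W_nonneg that unfolding r_def by (intro sum_nonneg) auto
  have rle: "r i \<le> norm_inf_mat n W" if "i < n" for i
  proof -
    have "r i = (\<Sum>j<n. \<bar>W $$ (i,j)\<bar>)" unfolding r_def using W_nonneg that by simp
    also have "\<dots> \<le> norm_inf_mat n W" unfolding norm_inf_mat_def
      using that by (intro Max_ge) auto
    finally show ?thesis .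
  qed
  have S: "(\<Sum>i<n. c $ i * r i) = lam * C"
    unfolding r_def C_def by (rule eig_sum[OF W_carrier c_dim c_eig])
  have "lam * C \<ge> 0" unfolding S[symmetric] using c_pos rnn
    by (intro sum_nonneg) (simp add: less_imp_le)
  hence lam_nn: "lam \<ge> 0" using Cpos by (simp add: zero_le_mult_iff)
  have "lam * C \<le> (\<Sum>i<n. c $ i * norm_inf_mat n W)" unfolding S[symmetric]
    using c_pos rle by (intro sum_mono mult_left_mono) (auto simp: less_imp_le)
  also have "\<dots> = norm_inf_mat n W * C" unfolding C_def by (simp add: sum_distrib_left mult.commute)
  finally have "lam \<le> norm_inf_mat n W" using Cpos by simp
  define a where "a = 1 - lam"
  have a2b: "a > 2*\<beta>" and a4g: "a > 4*\<gamma>" using norm_cond \<open>lam \<le> norm_inf_mat n W\<close>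
    unfolding a_def by auto
  have chi: "chi_val n W c s = lam"
  proof -
    have "chi_val n W c s = (\<Sum>i<n. c $ i * r i) / C"
      unfolding chi_val_def C_def[symmetric] r_def using s_one
      by (simp add: sum_divide_distrib)
    thus ?thesis using S Cpos by simp
  qed
  have img: "(\<lambda>i. s $ i) ` {..<n} = {1}" using s_one n_pos by auto
  have G1: "G = {0..1}" unfolding G_def img by simp
  have H1: "H = {1}" unfolding H_def img by simp
  define b where "b = a - \<gamma>"
  define M where "M = a*(a-\<beta>)"
  define K where "K = (\<beta> - \<gamma> - 2*(a-\<gamma>))/\<gamma>"
  define phi where "phi = (\<lambda>t::real. t + M/t)"
  have bpos: "b > 0" unfolding b_def using a4g gamma_pos by simp
  have Mpos: "M > 0" unfolding M_def using a2b beta_gamma gamma_pos by (simp add: mult_pos_pos)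
  have Fform: "f g 1 = C * (phi (b + g*\<gamma>) / \<gamma> + K)" if "g \<ge> 0" for g
  proof -
    have shat: "(\<Sum>i<n. c $ i / C * s $ i) = 1"
      using s_one Cpos unfolding C_def by (simp add: sum_divide_distrib[symmetric])
    have chi': "(\<Sum>i<n. c $ i / C * s $ i * (\<Sum>j<n. W $$ (i,j)))  = lam"
      using chi unfolding chi_val_def C_def by simp
    have tpos: "a - \<gamma> + g*\<gamma> > 0" using bpos that gamma_pos unfolding b_def
      by (simp add: add_pos_nonneg)
    have "f g 1 = ((1 - 2*\<beta> + (1 - g)*\<gamma>) - (1 - a) + (1 + g)*\<beta> + (g^2 - 1^2)*\<gamma>) / (a + (g - 1)*\<gamma>) * C"
      unfolding f_def steady_f_def Let_def C_def[symmetric] shat chi' a_def by simp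
    also have "\<dots> = C * (phi (b + g*\<gamma>) / \<gamma> + K)"
      unfolding ratio_form[OF gamma_pos tpos] phi_def b_def K_def M_def by (simp add: add_divide_distrib)
    finally show ?thesis .
  qed
  have Fless: "f g0 1 < f g 1" if "g0 \<ge> 0" "g \<ge> 0" "phi (b + g0*\<gamma>) < phi (b + g*\<gamma>)" for g0 g
    unfolding Fform[OF that(1)] Fform[OF that(2)] using that(3) Cpos gamma_pos
    by (simp add: divide_strict_right_mono)
  have Fle: "f g0 1 \<le> f g 1" if "g0 \<ge> 0" "g \<ge> 0" "phi (b + g0*\<gamma>) \<le> phi (b + g*\<gamma>)" for g0 g
    unfolding Fform[OF that(1)] Fform[OF that(2)] using that(3) Cpos gamma_pos
    by (simp add: divide_right_mono)
  have "m11 = \<beta>*a" unfolding m11_def chi a_def by (simp add: algebra_simps)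
  hence m11pos: "m11 > 0" using a2b beta_gamma gamma_pos by simp
  have m01eq: "m01 = b*b - M" unfolding m01_def chi M_def b_def a_def by (simp add: algebra_simps)
  have w1eq: "w1 = (sqrt M - b)/\<gamma>"
  proof -
    have "1 - \<beta> + (lam + \<gamma> + \<beta> - 2)*lam - lam*\<gamma> = M" unfolding M_def a_def by (simp add: algebra_simps)
    thus ?thesis unfolding w1_def chi b_def a_def by simp
  qed
  define g0 where "g0 = (if m01 \<ge> 0 then 0 else w1)"
  have key: "g0 \<in> {0..1} \<and> (\<forall>g\<in>{0..1}. g \<noteq> g0 \<longrightarrow> phi (b + g0*\<gamma>) < phi (b + g*\<gamma>))"
  proof (cases "m01 \<ge> 0")
    case True
    hence M_le: "M \<le> b*b" using m01eq by simp
    have "phi b < phi (b + g*\<gamma>)" if "g \<in> {0..1}" "g \<noteq> 0" for g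
    proof -
      have gp: "g > 0" using that by auto
      define t where "t = b + g*\<gamma>"
      have tb: "t > b" unfolding t_def using gp gamma_pos by simp
      have "t*b > b*b" using tb bpos by (simp add: mult_strict_right_mono)
      hence h1: "t*b - M > 0" using M_le by linarith
      have h2: "t - b > 0" "t*b > 0" using tb bpos by auto
      have "(t - b) * (t*b - M) / (t*b) > 0" by (rule divide_pos_pos[OF mult_pos_pos[OF h2(1) h1] h2(2)])
      thus ?thesis using phi_diff[of t b M] tb bpos unfolding phi_def t_def by simp
    qed
    thus ?thesis unfolding g0_def using True by simp
  next
    case False
    hence Mgt: "M > b*b" using m01eq by simp
    define t0 where "t0 = sqrt M"
    have t0sq: "t0*t0 = M" unfolding t0_def using Mpos by simp
    have t0pos: "t0 > 0" unfolding t0_def using Mpos by simp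
    have t0b: "t0 > b"
    proof (rule ccontr)
      assume "\<not> t0 > b" hence "t0 \<le> b" by simp
      hence "t0*t0 \<le> b*b" using t0pos by (simp add: mult_mono)
      thus False using t0sq Mgt by simp
    qed
    have t0a: "t0 < b + \<gamma>"
    proof (rule ccontr)
      assume "\<not> t0 < b + \<gamma>" hence "t0 \<ge> a" unfolding b_def by simp
      hence "t0*t0 \<ge> a*a" using a4g gamma_pos by (simp add: mult_mono)
      moreover have "a*\<beta> > 0" using a2b beta_gamma gamma_pos by simp
      hence "M < a*a" unfolding M_def by (simp add: algebra_simps)
      ultimately show False using t0sq by simp
    qed
    have g0eq: "g0 = (t0 - b)/\<gamma>" unfolding g0_def using False w1eq t0_def by simp
    have bg0: "b + g0*\<gamma> = t0" unfolding g0eq using gamma_pos by simp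
    have g0in: "g0 \<in> {0..1}" unfolding g0eq using t0b t0a gamma_pos
      by (auto simp: divide_le_eq_1)
    have "phi t0 < phi (b + g*\<gamma>)" if "g \<in> {0..1}" "g \<noteq> g0" for g
    proof -
      define t where "t = b + g*\<gamma>"
      have tpos: "t > 0" unfolding t_def using that bpos gamma_pos by (simp add: add_pos_nonneg)
      have "t \<noteq> t0" using that bg0 gamma_pos unfolding t_def by auto
      hence "(t - t0) * (t*t0 - M) / (t*t0) > 0"
      proof -
        have "(t - t0) * (t*t0 - M) = t0 * ((t - t0)*(t - t0))" using t0sq by (simp add: algebra_simps)
        moreover have "(t - t0)*(t - t0) > 0" using \<open>t \<noteq> t0\<close> by (auto simp add: zero_less_mult_iff)
        moreover have "t*t0 > 0" using t0pos tpos by simp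
        ultimately show ?thesis using t0pos by (metis divide_pos_pos mult_pos_pos)
      qed
      thus ?thesis using phi_diff[of t t0 M] tpos t0pos unfolding phi_def t_def by simp
    qed
    thus ?thesis using g0in bg0 by simp
  qed
  have mem: "nash_eq f G H p \<longleftrightarrow> p = (g0, 1)" for p
  proof
    assume "nash_eq f G H p"
    hence p: "fst p \<in> {0..1}" "snd p = 1" "\<forall>g\<in>{0..1}. f (fst p) 1 \<le> f g 1"
      unfolding nash_eq_def G1 H1 by auto
    have "fst p = g0"
    proof (rule ccontr)
      assume "fst p \<noteq> g0"
      hence "f g0 1 < f (fst p) 1" using key p(1) by (intro Fless) auto
      moreover have "f (fst p) 1 \<le> f g0 1" using p(3) key by auto
      ultimately show False by simp
    qed
    thus "p = (g0, 1)" using p(2) by (cases p) auto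
  next
    assume pe: "p = (g0, 1)"
    have "f g0 1 \<le> f g 1" if "g \<in> {0..1}" for g
    proof (cases "g = g0")
      case False
      have "f g0 1 < f g 1" using key that False by (intro Fless) auto
      thus ?thesis by simp
    qed simp
    thus "nash_eq f G H p" unfolding nash_eq_def G1 H1 pe using key by auto
  qed
  have setg: "{p. nash_eq f G H p} = {(g0, 1)}" using mem by auto
  show ?thesis unfolding setg g0_def using m11pos by auto
qed

end
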